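(* Let $m,n\ge 0$ and let $A:\Sigma^m\to\Sigma^n$, $B:\Sigma\to\Sigma^n$, $C:\Sigma^m\to\Sigma$ be $\mathsf{R}$-module homomorphisms, and let $d\in\mathsf{R}$ be either $0$ or of positive order, i.e. $d=xf$ for some $f\in\mathsf{R}$. Define $F:\Sigma^m\times\Sigma\to\Sigma^n\times\Sigma$ by $F(\alpha,\sigma)=(A(\alpha)+B(\sigma),\,C(\alpha)+\sigma d)$. Let $I$ be any ideal of $\mathsf{R}$, and suppose $F(\alpha,\sigma)=(\beta,\tau)$ for some $\alpha,\beta,\sigma,\tau$ with $\sigma-\tau\in I$. Then there exist unique $\beta'\in\Sigma^n$ and $\sigma'\in\Sigma$ such that $F(\alpha,\sigma')=(\beta',\sigma')$, and for these one has $\sigma'-\sigma\in I$.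
   Context: $\mathsf{R}=\mathbb{R}[[x]]$ is the ring of formal power series with real coefficients. $\Sigma$ is the set of streams of reals (functions $\mathbb{N}\to\mathbb{R}$), identified with $\mathsf{R}$ via $\sigma\mapsto\sum_i\sigma_i x^i$; $\Sigma^k$ is the $k$-fold cartesian product ($\Sigma^0$ a singleton), an $\mathsf{R}$-module with $\mathsf{R}$ acting componentwise by multiplication. The order of a nonzero $f\in\mathsf{R}$ is the least $i$ with $f_i\neq 0$. *)

theory Defs
  imports "HOL-Computational_Algebra.Formal_Power_Series"
begin

text \<open>R = real fps. The module Sigma^k is represented by functions nat => real fps
  that vanish at every index >= k (so Sigma^0 is the singleton containing the zero function).\<close>

definition svec :: "nat \<Rightarrow> (nat \<Rightarrow> real fps) set" where
  "svec k = {v. \<forall>i\<ge>k. v i = 0}"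

definition hom_vv :: "nat \<Rightarrow> nat \<Rightarrow> ((nat \<Rightarrow> real fps) \<Rightarrow> (nat \<Rightarrow> real fps)) \<Rightarrow> bool" where
  "hom_vv m n A \<longleftrightarrow>
     (\<forall>v\<in>svec m. A v \<in> svec n) \<and>
     (\<forall>u\<in>svec m. \<forall>v\<in>svec m. A (\<lambda>i. u i + v i) = (\<lambda>i. A u i + A v i)) \<and>
     (\<forall>c. \<forall>v\<in>svec m. A (\<lambda>i. c * v i) = (\<lambda>i. c * A v i))"

definition hom_sv :: "nat \<Rightarrow> (real fps \<Rightarrow> (nat \<Rightarrow> real fps)) \<Rightarrow> bool" where
  "hom_sv n B \<longleftrightarrow>
     (\<forall>s. B s \<in> svec n) \<and>
     (\<forall>s t. B (s + t) = (\<lambda>i. B s i + B t i)) \<and>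
     (\<forall>c s. B (c * s) = (\<lambda>i. c * B s i))"

definition hom_vs :: "nat \<Rightarrow> ((nat \<Rightarrow> real fps) \<Rightarrow> real fps) \<Rightarrow> bool" where
  "hom_vs m C \<longleftrightarrow>
     (\<forall>u\<in>svec m. \<forall>v\<in>svec m. C (\<lambda>i. u i + v i) = C u + C v) \<and>
     (\<forall>c. \<forall>v\<in>svec m. C (\<lambda>i. c * v i) = c * C v)"

definition fps_ideal :: "real fps set \<Rightarrow> bool" where
  "fps_ideal I \<longleftrightarrow> 0 \<in> I \<and> (\<forall>a\<in>I. \<forall>b\<in>I. a + b \<in> I) \<and> (\<forall>r. \<forall>a\<in>I. r * a \<in> I)"

definition Fmap :: "((nat \<Rightarrow> real fps) \<Rightarrow> (nat \<Rightarrow> real fps)) \<Rightarrow> (real fps \<Rightarrow> (nat \<Rightarrow> real fps))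
    \<Rightarrow> ((nat \<Rightarrow> real fps) \<Rightarrow> real fps) \<Rightarrow> real fps
    \<Rightarrow> (nat \<Rightarrow> real fps) \<Rightarrow> real fps \<Rightarrow> (nat \<Rightarrow> real fps) \<times> real fps" where
  "Fmap A B C d \<alpha> \<sigma> = ((\<lambda>i. A \<alpha> i + B \<sigma> i), C \<alpha> + \<sigma> * d)"

end

theory Submission
  imports Defs
begin

theorem lemma5p2:
  fixes m n :: nat
    and A :: "(nat \<Rightarrow> real fps) \<Rightarrow> (nat \<Rightarrow> real fps)"
    and B :: "real fps \<Rightarrow> (nat \<Rightarrow> real fps)"
    and C :: "(nat \<Rightarrow> real fps) \<Rightarrow> real fps"
    and d :: "real fps" and I :: "real fps set"
    and \<alpha> \<beta> :: "nat \<Rightarrow> real fps" and \<sigma> \<tau> :: "real fps"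
  assumes "hom_vv m n A" and "hom_sv n B" and "hom_vs m C"
    and "\<exists>f. d = fps_X * f"
    and "fps_ideal I"
    and "\<alpha> \<in> svec m" and "\<beta> \<in> svec n"
    and "Fmap A B C d \<alpha> \<sigma> = (\<beta>, \<tau>)"
    and "\<sigma> - \<tau> \<in> I"
  shows "(\<exists>!p. fst p \<in> svec n \<and> Fmap A B C d \<alpha> (snd p) = (fst p, snd p)) \<and>
         (\<forall>\<beta>' \<sigma>'. \<beta>' \<in> svec n \<and> Fmap A B C d \<alpha> \<sigma>' = (\<beta>', \<sigma>') \<longrightarrow> \<sigma>' - \<sigma> \<in> I)"
proof -
  define e where "e = 1 - d"
  obtain f where f: "d = fps_X * f" using assms(4) by blast
  have e0: "fps_nth e 0 \<noteq> 0" unfolding e_def f by simp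
  have inv: "inverse e * e = 1" using e0 by (simp add: inverse_mult_eq_1)
  have fix_iff: "s = C \<alpha> + s * d \<longleftrightarrow> s = inverse e * C \<alpha>" for s
  proof
    assume "s = C \<alpha> + s * d"
    hence "s * e = C \<alpha>" unfolding e_def by (simp add: algebra_simps)
    hence "inverse e * (s * e) = inverse e * C \<alpha>" by simp
    moreover have "inverse e * (s * e) = s" by (metis inv mult.assoc mult.commute mult_1_left)
    ultimately show "s = inverse e * C \<alpha>" by simp
  next
    assume "s = inverse e * C \<alpha>"
    hence "s * e = C \<alpha>" using inv by (metis mult.assoc mult.commute mult_1_right)
    thus "s = C \<alpha> + s * d" unfolding e_def by (simp add: algebra_simps)
  qed
  define s' where "s' = inverse e * C \<alpha>"
  define b' where "b' = (\<lambda>i. A \<alpha> i + B s' i)"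
  have Ain: "A \<alpha> \<in> svec n" using assms(1,6) unfolding hom_vv_def by blast
  have Bin: "B s' \<in> svec n" using assms(2) unfolding hom_sv_def by blast
  have b'in: "b' \<in> svec n" using Ain Bin unfolding b'_def svec_def by simp
  have P: "fst (b', s') \<in> svec n \<and> Fmap A B C d \<alpha> (snd (b', s')) = (fst (b', s'), snd (b', s'))"
    using b'in fix_iff[of s'] unfolding Fmap_def b'_def s'_def by simp
  have U: "p = (b', s')" if "fst p \<in> svec n \<and> Fmap A B C d \<alpha> (snd p) = (fst p, snd p)" for p
  proof -
    from that have h1: "(\<lambda>i. A \<alpha> i + B (snd p) i) = fst p" and h2: "C \<alpha> + snd p * d = snd p"
      unfolding Fmap_def by (metis fst_conv snd_conv prod.collapse)+
    have "snd p = s'" using fix_iff h2 unfolding s'_def by metis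
    with h1 show ?thesis unfolding b'_def by (cases p) auto
  qed
  have tau: "\<tau> = C \<alpha> + \<sigma> * d" using assms(8) unfolding Fmap_def by simp
  have I2: "\<sigma>' - \<sigma> \<in> I" if "\<beta>' \<in> svec n \<and> Fmap A B C d \<alpha> \<sigma>' = (\<beta>', \<sigma>')" for \<beta>' \<sigma>'
  proof -
    from that have h2: "C \<alpha> + \<sigma>' * d = \<sigma>'" unfolding Fmap_def by auto
    have "(\<sigma>' - \<sigma>) * e = \<tau> - \<sigma>" using h2 tau unfolding e_def by (simp add: algebra_simps)
    also have "\<dots> = (-1) * (\<sigma> - \<tau>)" by simp
    finally have eq: "(\<sigma>' - \<sigma>) * e = (-1) * (\<sigma> - \<tau>)" .
    have "(-1) * (\<sigma> - \<tau>) \<in> I" using assms(5,9) unfolding fps_ideal_def by blast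
    hence "inverse e * ((\<sigma>' - \<sigma>) * e) \<in> I" using eq assms(5) unfolding fps_ideal_def by metis
    moreover have "inverse e * ((\<sigma>' - \<sigma>) * e) = \<sigma>' - \<sigma>" by (metis inv mult.assoc mult.commute mult_1_left)
    ultimately show ?thesis by simp
  qed
  show ?thesis using P U I2 by blast
qed

end
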